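(* Let $\mathcal{Z}=\{z_1,\dots,z_K\}$ with counting measure, $P$ a probability on $\mathcal{Z}$, and for a fixed noise level $\sigma$ let $q_{\sigma\mid0}(\cdot\mid z_0)$ be a Markov kernel on $\mathcal{Z}$ such that the corrupted marginal $P_\sigma(z)=\sum_{z_0}P(z_0)q_{\sigma\mid0}(z\mid z_0)$ satisfies $P_\sigma(z_i)>0$ for all $i$. Let $(\omega_{ij})$ be a symmetric Markov kernel: $\omega_{ij}=\omega_{ji}\ge0$, $\sum_j\omega_{ij}=1$, and write $\omega(\cdot\mid z_i)=(\omega_{ij})_j$. Define, for $g:\mathcal{Z}\to\mathbb{R}$, $$\mathcal{L}_\sigma(g)=\mathbb{E}_{z_0\sim P}\,\mathbb{E}_{z_\sigma\sim q_{\sigma\mid0}(\cdot\mid z_0)}\,\mathbb{E}_{\tilde z\sim\omega(\cdot\mid z_\sigma)}\left[\tanh\!\left(\frac{g(z_\sigma)-g(\tilde z)}{2}\right)-1\right]^2.$$ Then $\mathcal{L}_\sigma(g)=\sum_{i,j}P_\sigma(z_i)\omega_{ij}\left[\tanh\!\left(\frac{g(z_i)-g(z_j)}{2}\right)-1\right]^2$, and $g$ minimizes $\mathcal{L}_\sigma$ over all functions $\mathcal{Z}\to\mathbb{R}$ if and only if $g(z_i)-\log P_\sigma(z_i)$ is constant on each connected component of the graph on $\{1,\dots,K\}$ with edges $\{i,j\}$, $i\ne j$, for which $\omega_{ij}>0$. *)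

theory Defs
  imports Complex_Main
begin

text \<open>The finite space Z = {z_1,...,z_K} is identified with the index set {..<K}
  (counting measure); functions on Z are functions nat => real whose values
  outside {..<K} are irrelevant.\<close>

definition corrupted_marginal :: "nat \<Rightarrow> (nat \<Rightarrow> real) \<Rightarrow> (nat \<Rightarrow> nat \<Rightarrow> real) \<Rightarrow> nat \<Rightarrow> real" where
  "corrupted_marginal K P q z = (\<Sum>z0<K. P z0 * q z0 z)"

definition denoise_loss ::
  "nat \<Rightarrow> (nat \<Rightarrow> real) \<Rightarrow> (nat \<Rightarrow> nat \<Rightarrow> real) \<Rightarrow> (nat \<Rightarrow> nat \<Rightarrow> real) \<Rightarrow> (nat \<Rightarrow> real) \<Rightarrow> real" where
  "denoise_loss K P q \<omega> g =
     (\<Sum>z0<K. P z0 * (\<Sum>zs<K. q z0 zs * (\<Sum>zt<K. \<omega> zs zt * (tanh ((g zs - g zt) / 2) - 1)\<^sup>2)))"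

definition omega_edge :: "nat \<Rightarrow> (nat \<Rightarrow> nat \<Rightarrow> real) \<Rightarrow> nat \<Rightarrow> nat \<Rightarrow> bool" where
  "omega_edge K \<omega> i j \<longleftrightarrow> i < K \<and> j < K \<and> i \<noteq> j \<and> \<omega> i j > 0"

definition const_on_components :: "nat \<Rightarrow> (nat \<Rightarrow> nat \<Rightarrow> real) \<Rightarrow> (nat \<Rightarrow> real) \<Rightarrow> bool" where
  "const_on_components K \<omega> f \<longleftrightarrow>
     (\<forall>i<K. \<forall>j<K. (omega_edge K \<omega>)\<^sup>*\<^sup>* i j \<longrightarrow> f i = f j)"

end

theory Submission
  imports Defs
begin

lemma F_alt: "(tanh ((x::real)/2) - 1)^2 = 4 / (1 + exp x)^2"
proof -
  have e: "exp (- 2 * (x/2)) = 1 / (exp x)" by (simp add: exp_minus field_simps)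
  have ep: "exp x > 0" "1 + exp x > 0" "exp x + 1 > 0" using exp_gt_zero[of x] by linarith+
  have "tanh (x/2) = (1 - 1 / exp x) / (1 + 1 / exp x)"
    unfolding tanh_real_altdef e ..
  also have "... = (exp x - 1) / (exp x + 1)" using ep by (simp add: divide_simps)
  finally have "tanh (x/2) - 1 = (exp x - 1) / (exp x + 1) - 1" by simp
  also have "... = - 2 / (1 + exp x)" using ep by (simp add: field_simps)
  finally have "tanh (x/2) - 1 = - 2 / (1 + exp x)" .
  then show ?thesis by (simp add: power2_eq_square)
qed

lemma dsum0: assumes "\<And>i j. i<K \<Longrightarrow> j < K \<Longrightarrow> (X::nat\<Rightarrow>nat\<Rightarrow>real) i j \<ge> 0"
  shows "((\<Sum>i<K. \<Sum>j<K. X i j) = 0) = (\<forall>i<K. \<forall>j<K. X i j = 0)"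
proof -
  have "((\<Sum>i<K. \<Sum>j<K. X i j) = 0) = (\<forall>i<K. (\<Sum>j<K. X i j) = 0)"
    by (subst sum_nonneg_eq_0_iff) (auto intro!: sum_nonneg assms)
  also have "... = (\<forall>i<K. \<forall>j<K. X i j = 0)"
  proof -
    have "((\<Sum>j<K. X i j) = 0) = (\<forall>j<K. X i j = 0)" if "i < K" for i
      by (subst sum_nonneg_eq_0_iff) (auto intro: assms that)
    then show ?thesis by auto
  qed
  finally show ?thesis .
qed

lemma pair_id:
  fixes a b d :: real
  assumes "a > 0" "b > 0"
  shows "a * (tanh (d/2) - 1)^2 + b * (tanh ((-d)/2) - 1)^2
       = 4*a*b/(a+b) + 4*(a - b*exp d)^2/((a+b)*(1+exp d)^2)"
proof -
  define u where "u = exp d"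
  have u: "u > 0" unfolding u_def by simp
  have em: "exp (-d) = 1/u" unfolding u_def by (simp add: exp_minus field_simps)
  have "a * (tanh (d/2) - 1)^2 + b * (tanh ((-d)/2) - 1)^2
      = a * (4/(1+u)^2) + b * (4/(1+1/u)^2)"
    by (simp only: F_alt em u_def[symmetric])
  also have "... = a * (4/(1+u)^2) + b * (4*u^2/(1+u)^2)"
    using u by (simp add: field_simps)
  also have "... = 4*a*b/(a+b) + 4*(a - b*u)^2/((a+b)*(1+u)^2)"
  proof -
    define v where "v = (1+u)^2"
    define w where "w = a+b"
    have d1: "v > 0" using u unfolding v_def by simp
    have d2: "w > 0" using assms unfolding w_def by simp
    have "a * (4/v) + b * (4*u^2/v) = 4*a*b/w + 4*(a - b*u)^2/(w*v)"
      using d1 d2 by (simp add: field_simps) (simp add: v_def w_def power2_eq_square algebra_simps)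
    then show ?thesis unfolding v_def w_def .
  qed
  finally show ?thesis unfolding u_def .
qed

lemma R_nonneg: "(a::real) > 0 \<Longrightarrow> b > 0 \<Longrightarrow> 4*(a - b*exp d)^2/((a+b)*(1+exp d)^2) \<ge> 0"
proof -
  assume a: "a > 0" and b: "b > 0"
  have "1 + exp d > 0" using exp_gt_zero[of d] by linarith
  then have "(a+b)*(1+exp d)^2 > 0" using a b by (intro mult_pos_pos) auto
  then show ?thesis by simp
qed

lemma R_zero: "(a::real) > 0 \<Longrightarrow> b > 0 \<Longrightarrow>
  (4*(a - b*exp d)^2/((a+b)*(1+exp d)^2) = 0) \<longleftrightarrow> a = b * exp d"
proof -
  assume a: "a > 0" and b: "b > 0"
  have "1 + exp d > 0" using exp_gt_zero[of d] by linarith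
  then show ?thesis using a b by simp
qed

lemma loss_rewrite:
  "denoise_loss K P q \<omega> g =
     (\<Sum>i<K. \<Sum>j<K. corrupted_marginal K P q i * \<omega> i j * (tanh ((g i - g j) / 2) - 1)\<^sup>2)"
proof -
  have "denoise_loss K P q \<omega> g =
     (\<Sum>z0<K. \<Sum>zs<K. P z0 * q z0 zs * (\<Sum>zt<K. \<omega> zs zt * (tanh ((g zs - g zt) / 2) - 1)\<^sup>2))"
    unfolding denoise_loss_def by (simp add: sum_distrib_left mult.assoc)
  also have "... = (\<Sum>zs<K. \<Sum>z0<K. P z0 * q z0 zs * (\<Sum>zt<K. \<omega> zs zt * (tanh ((g zs - g zt) / 2) - 1)\<^sup>2))"
    by (rule sum.swap)
  also have "... = (\<Sum>zs<K. corrupted_marginal K P q zs * (\<Sum>zt<K. \<omega> zs zt * (tanh ((g zs - g zt) / 2) - 1)\<^sup>2))"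
    unfolding corrupted_marginal_def by (simp add: sum_distrib_right)
  also have "... = (\<Sum>i<K. \<Sum>j<K. corrupted_marginal K P q i * \<omega> i j * (tanh ((g i - g j) / 2) - 1)\<^sup>2)"
    by (simp add: sum_distrib_left mult.assoc)
  finally show ?thesis .
qed

theorem mainTheorem8:
  fixes K :: nat and P :: "nat \<Rightarrow> real" and q \<omega> :: "nat \<Rightarrow> nat \<Rightarrow> real"
    and g :: "nat \<Rightarrow> real"
  assumes P_nonneg: "\<forall>i<K. P i \<ge> 0"
    and P_sum: "(\<Sum>i<K. P i) = 1"
    and q_nonneg: "\<forall>i<K. \<forall>j<K. q i j \<ge> 0"
    and q_sum: "\<forall>i<K. (\<Sum>j<K. q i j) = 1"
    and P\<sigma>_pos: "\<forall>i<K. corrupted_marginal K P q i > 0"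
    and \<omega>_sym: "\<forall>i<K. \<forall>j<K. \<omega> i j = \<omega> j i"
    and \<omega>_nonneg: "\<forall>i<K. \<forall>j<K. \<omega> i j \<ge> 0"
    and \<omega>_sum: "\<forall>i<K. (\<Sum>j<K. \<omega> i j) = 1"
  shows "denoise_loss K P q \<omega> g =
           (\<Sum>i<K. \<Sum>j<K. corrupted_marginal K P q i * \<omega> i j * (tanh ((g i - g j) / 2) - 1)\<^sup>2)
         \<and> ((\<forall>h :: nat \<Rightarrow> real. denoise_loss K P q \<omega> g \<le> denoise_loss K P q \<omega> h)
            \<longleftrightarrow> const_on_components K \<omega> (\<lambda>i. g i - ln (corrupted_marginal K P q i)))"
proof -
  define p where "p = corrupted_marginal K P q"
  have pp: "\<And>i. i < K \<Longrightarrow> p i > 0" using P\<sigma>_pos p_def by auto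
  define C where "C = (\<Sum>i<K. \<Sum>j<K. \<omega> i j * (4 * p i * p j / (p i + p j)))"
  define R where "R = (\<lambda>h i j. 4*(p i - p j*exp (h i - h j))^2/((p i+p j)*(1+exp (h i - h j))^2))"
  define S where "S = (\<lambda>h. \<Sum>i<K. \<Sum>j<K. \<omega> i j * R h i j)"
  have R_nn: "\<And>h i j. i < K \<Longrightarrow> j < K \<Longrightarrow> R h i j \<ge> 0"
    unfolding R_def by (rule R_nonneg) (auto intro: pp)
  have key: "2 * denoise_loss K P q \<omega> h = C + S h" for h
  proof -
    define X where "X = (\<lambda>i j. p i * \<omega> i j * (tanh ((h i - h j) / 2) - 1)\<^sup>2)"
    have L: "denoise_loss K P q \<omega> h = (\<Sum>i<K. \<Sum>j<K. X i j)"
      unfolding loss_rewrite X_def p_def ..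
    have sw: "(\<Sum>i<K. \<Sum>j<K. X i j) = (\<Sum>i<K. \<Sum>j<K. X j i)" by (rule sum.swap)
    have pr: "X i j + X j i = \<omega> i j * (4 * p i * p j / (p i + p j)) + \<omega> i j * R h i j"
      if "i < K" "j < K" for i j
    proof -
      have "X i j + X j i = \<omega> i j * (p i * (tanh ((h i - h j) / 2) - 1)\<^sup>2
                 + p j * (tanh ((-(h i - h j)) / 2) - 1)\<^sup>2)"
        unfolding X_def using \<omega>_sym that by (simp add: algebra_simps)
      also have "... = \<omega> i j * (4 * p i * p j / (p i + p j) + R h i j)"
        unfolding R_def by (subst pair_id) (auto intro: pp that)
      finally show ?thesis by (simp add: algebra_simps)
    qed
    have "2 * denoise_loss K P q \<omega> h = (\<Sum>i<K. \<Sum>j<K. X i j) + (\<Sum>i<K. \<Sum>j<K. X j i)"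
      unfolding L using sw by simp
    also have "... = (\<Sum>i<K. \<Sum>j<K. X i j + X j i)"
      by (simp only: sum.distrib)
    also have "... = (\<Sum>i<K. \<Sum>j<K. \<omega> i j * (4 * p i * p j / (p i + p j)) + \<omega> i j * R h i j)"
      by (intro sum.cong refl) (simp add: pr)
    also have "... = C + S h"
      unfolding C_def S_def by (simp only: sum.distrib)
    finally show ?thesis .
  qed
  have S_nn: "S h \<ge> 0" for h
    unfolding S_def using \<omega>_nonneg R_nn by (intro sum_nonneg mult_nonneg_nonneg) auto
  define f where "f = (\<lambda>i. g i - ln (p i))"
  have Rz: "R h i j = 0 \<longleftrightarrow> h i - ln (p i) = h j - ln (p j)" if "i < K" "j < K" for h i j
  proof -
    have "R h i j = 0 \<longleftrightarrow> p i = p j * exp (h i - h j)"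
      unfolding R_def by (rule R_zero) (auto intro: pp that)
    also have "... \<longleftrightarrow> ln (p i) = ln (p j * exp (h i - h j))"
      using pp[OF that(1)] pp[OF that(2)] by simp
    also have "... \<longleftrightarrow> ln (p i) = ln (p j) + (h i - h j)"
      using pp[OF that(2)] by (simp add: ln_mult)
    also have "... \<longleftrightarrow> h i - ln (p i) = h j - ln (p j)" by linarith
    finally show ?thesis .
  qed
  have coc: "const_on_components K \<omega> f \<longleftrightarrow> (\<forall>i<K. \<forall>j<K. \<omega> i j > 0 \<longrightarrow> f i = f j)"
  proof
    assume H: "const_on_components K \<omega> f"
    show "\<forall>i<K. \<forall>j<K. \<omega> i j > 0 \<longrightarrow> f i = f j"
    proof (intro allI impI)
      fix i j assume "i < K" "j < K" "\<omega> i j > 0"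
      then show "f i = f j"
      proof (cases "i = j")
        case False
        then have "omega_edge K \<omega> i j" using \<open>i<K\<close> \<open>j<K\<close> \<open>\<omega> i j > 0\<close>
          unfolding omega_edge_def by auto
        then show ?thesis using H \<open>i<K\<close> \<open>j<K\<close> unfolding const_on_components_def by blast
      qed simp
    qed
  next
    assume H: "\<forall>i<K. \<forall>j<K. \<omega> i j > 0 \<longrightarrow> f i = f j"
    have "(omega_edge K \<omega>)\<^sup>*\<^sup>* i j \<Longrightarrow> f i = f j" for i j
    proof (induction rule: rtranclp_induct)
      case (step y z)
      then show ?case using H unfolding omega_edge_def by auto
    qed simp
    then show "const_on_components K \<omega> f" unfolding const_on_components_def by blast
  qed
  define h0 where "h0 = (\<lambda>i. ln (p i))"
  have S0: "S h0 = 0"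
  proof -
    have "R h0 i j = 0" if "i < K" "j < K" for i j
      using Rz[OF that, of h0] unfolding h0_def by simp
    then show ?thesis unfolding S_def by (intro sum.neutral ballI) simp
  qed
  have "(\<forall>h. denoise_loss K P q \<omega> g \<le> denoise_loss K P q \<omega> h) \<longleftrightarrow> S g = 0"
  proof
    assume "\<forall>h. denoise_loss K P q \<omega> g \<le> denoise_loss K P q \<omega> h"
    then have "denoise_loss K P q \<omega> g \<le> denoise_loss K P q \<omega> h0" by blast
    then have "S g \<le> S h0" using key[of g] key[of h0] by linarith
    then show "S g = 0" using S0 S_nn[of g] by linarith
  next
    assume "S g = 0"
    show "\<forall>h. denoise_loss K P q \<omega> g \<le> denoise_loss K P q \<omega> h"
    proof
      fix h
      show "denoise_loss K P q \<omega> g \<le> denoise_loss K P q \<omega> h"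
        using key[of g] key[of h] S_nn[of h] \<open>S g = 0\<close> by linarith
    qed
  qed
  also have "... \<longleftrightarrow> (\<forall>i<K. \<forall>j<K. \<omega> i j * R g i j = 0)"
    unfolding S_def
    by (rule dsum0) (use R_nn \<omega>_nonneg in auto)
  also have "... \<longleftrightarrow> (\<forall>i<K. \<forall>j<K. \<omega> i j > 0 \<longrightarrow> f i = f j)"
  proof -
    have "\<omega> i j * R g i j = 0 \<longleftrightarrow> (\<omega> i j > 0 \<longrightarrow> f i = f j)" if "i < K" "j < K" for i j
    proof -
      have "\<omega> i j \<ge> 0" using \<omega>_nonneg that by auto
      then show ?thesis using Rz[OF that, of g] unfolding f_def by (cases "\<omega> i j > 0") auto
    qed
    then show ?thesis by auto
  qed
  also have "... \<longleftrightarrow> const_on_components K \<omega> f" using coc by simp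
  finally show ?thesis using loss_rewrite unfolding f_def p_def by simp
qed

end
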